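(* Let $\Gamma(\mathbf{v})$ be a covariance matrix, viewed as an $N\times N$ block matrix with blocks $\Gamma_{\alpha\beta}$, and suppose $\Gamma(\mathbf{v})\in\mathcal{BC}_2$ (block coherence number at most two). Let $S$ be any set of unordered pairs $\{\alpha,\beta\}$ with $\alpha\neq\beta$, and let $\Gamma'$ be obtained from $\Gamma(\mathbf{v})$ by replacing $\Gamma_{\alpha\beta}$ by $-\Gamma_{\alpha\beta}$ and $\Gamma_{\beta\alpha}$ by $-\Gamma_{\beta\alpha}$ for every $\{\alpha,\beta\}\in S$ (all other blocks unchanged). Then $\Gamma'$ is positive semidefinite.
   Context: The covariance matrix of a distribution $p(x_1,\dots,x_N)$ is $\Gamma(\mathbf{v})=E(\mathbf{v}\mathbf{v}^\dagger)-E(\mathbf{v})E(\mathbf{v})^\dagger$, where $\mathbf{v}_{x_1,\dots,x_N}=|x_1\rangle+\dots+|x_N\rangle$ with $|x_n\rangle$ a basis vector of $\mathcal{V}_n$, the spaces $\mathcal{V}_1,\dots,\mathcal{V}_N$ mutually orthogonal, $E(\mathbf{v}\mathbf{v}^\dagger)=\sum_x\mathbf{v}_x\mathbf{v}_x^\dagger p(x)$, $E(\mathbf{v})=\sum_x\mathbf{v}_xp(x)$; block $\Gamma_{\alpha\beta}=P_\alpha\Gamma P_\beta$ where $P_n$ is the orthogonal projector onto $\mathcal{V}_n$. $\mathcal{BC}_2$ is the set of all finite sums of operators $|\psi\rangle\langle\psi|$ where $|\psi\rangle$ has at most two nonzero components $P_n|\psi\rangle$. *)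

theory Defs
  imports Complex_Main "HOL-Library.FuncSet" "HOL-Library.Complex_Order"
begin

text \<open>Setting: N parties; party n has outcomes {0..<d n}, which label an
orthonormal basis of the space V_n.  The direct sum V_1 + ... + V_N has
orthonormal basis indexed by pairs (n,k) with n < N and k < d n; the block
of index (n,k) is n.\<close>

definition idx :: "nat \<Rightarrow> (nat \<Rightarrow> nat) \<Rightarrow> (nat \<times> nat) set" where
  "idx N d = {(n,k). n < N \<and> k < d n}"

definition outcomes :: "nat \<Rightarrow> (nat \<Rightarrow> nat) \<Rightarrow> (nat \<Rightarrow> nat) set" where
  "outcomes N d = (\<Pi>\<^sub>E n\<in>{..<N}. {..<d n})"

definition is_distribution ::
  "nat \<Rightarrow> (nat \<Rightarrow> nat) \<Rightarrow> ((nat \<Rightarrow> nat) \<Rightarrow> real) \<Rightarrow> bool" where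
  "is_distribution N d p \<longleftrightarrow>
     (\<forall>x\<in>outcomes N d. 0 \<le> p x) \<and> (\<Sum>x\<in>outcomes N d. p x) = 1"

text \<open>v_x = |x_1> + ... + |x_N>, as a coordinate vector.\<close>
definition vvec :: "(nat \<Rightarrow> nat) \<Rightarrow> nat \<times> nat \<Rightarrow> real" where
  "vvec x i = (if x (fst i) = snd i then 1 else 0)"

definition covariance ::
  "nat \<Rightarrow> (nat \<Rightarrow> nat) \<Rightarrow> ((nat \<Rightarrow> nat) \<Rightarrow> real) \<Rightarrow> nat \<times> nat \<Rightarrow> nat \<times> nat \<Rightarrow> complex" where
  "covariance N d p i j = complex_of_real
     ((\<Sum>x\<in>outcomes N d. vvec x i * vvec x j * p x)
      - (\<Sum>x\<in>outcomes N d. vvec x i * p x) * (\<Sum>x\<in>outcomes N d. vvec x j * p x))"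

definition nblocks :: "nat \<Rightarrow> (nat \<Rightarrow> nat) \<Rightarrow> (nat \<times> nat \<Rightarrow> complex) \<Rightarrow> nat" where
  "nblocks N d \<psi> = card {n. n < N \<and> (\<exists>k < d n. \<psi> (n,k) \<noteq> 0)}"

definition in_BC2 :: "nat \<Rightarrow> (nat \<Rightarrow> nat) \<Rightarrow> (nat \<times> nat \<Rightarrow> nat \<times> nat \<Rightarrow> complex) \<Rightarrow> bool" where
  "in_BC2 N d M \<longleftrightarrow> (\<exists>(\<Psi> :: (nat \<times> nat \<Rightarrow> complex) set). finite \<Psi> \<and>
      (\<forall>\<psi>\<in>\<Psi>. nblocks N d \<psi> \<le> 2) \<and>
      (\<forall>i\<in>idx N d. \<forall>j\<in>idx N d. M i j = (\<Sum>\<psi>\<in>\<Psi>. \<psi> i * cnj (\<psi> j))))"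

definition psd :: "nat \<Rightarrow> (nat \<Rightarrow> nat) \<Rightarrow> (nat \<times> nat \<Rightarrow> nat \<times> nat \<Rightarrow> complex) \<Rightarrow> bool" where
  "psd N d M \<longleftrightarrow> (\<forall>z :: nat \<times> nat \<Rightarrow> complex.
      0 \<le> (\<Sum>i\<in>idx N d. \<Sum>j\<in>idx N d. cnj (z i) * M i j * z j))"

definition flip_blocks :: "nat set set \<Rightarrow> (nat \<times> nat \<Rightarrow> nat \<times> nat \<Rightarrow> complex)
    \<Rightarrow> nat \<times> nat \<Rightarrow> nat \<times> nat \<Rightarrow> complex" where
  "flip_blocks S M i j = (if {fst i, fst j} \<in> S then - M i j else M i j)"

end

theory Submission
  imports Defs
begin

definition phi :: "nat \<Rightarrow> (nat \<Rightarrow> nat) \<Rightarrow> nat set set \<Rightarrow> (nat \<times> nat \<Rightarrow> complex) \<Rightarrow> nat \<times> nat \<Rightarrow> complex" where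
  "phi N d S \<psi> i = (if \<exists>a. a < N \<and> a < fst i \<and> (\<exists>k<d a. \<psi> (a,k) \<noteq> 0) \<and> {a, fst i} \<in> S
      then - \<psi> i else \<psi> i)"

lemma card_le2:
  assumes "finite B" "card B \<le> 2" "a \<in> B" "b \<in> B" "c \<in> B" "a \<noteq> b"
  shows "c = a \<or> c = b"
proof (rule ccontr)
  assume "\<not> (c = a \<or> c = b)"
  then have "{a,b,c} \<subseteq> B" "card {a,b,c} = 3" using assms by auto
  then have "3 \<le> card B" using assms(1) by (metis card_mono)
  then show False using assms(2) by simp
qed

lemma term_eq:
  assumes S: "\<forall>e\<in>S. \<exists>a b. a < N \<and> b < N \<and> a \<noteq> b \<and> e = {a, b}"
    and nb: "nblocks N d \<psi> \<le> 2"
    and i: "i \<in> idx N d" and j: "j \<in> idx N d"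
  shows "(if {fst i, fst j} \<in> S then - (\<psi> i * cnj (\<psi> j)) else \<psi> i * cnj (\<psi> j))
         = phi N d S \<psi> i * cnj (phi N d S \<psi> j)"
proof (cases "\<psi> i = 0 \<or> \<psi> j = 0")
  case True
  then show ?thesis by (auto simp: phi_def)
next
  case False
  define B where "B = {n. n < N \<and> (\<exists>k < d n. \<psi> (n,k) \<noteq> 0)}"
  have fB: "finite B" unfolding B_def by auto
  have cB: "card B \<le> 2" using nb unfolding nblocks_def B_def by simp
  obtain a k where ik: "i = (a,k)" by force
  obtain b l where jl: "j = (b,l)" by force
  have aB: "a \<in> B" using i False ik unfolding B_def idx_def by auto
  have bB: "b \<in> B" using j False jl unfolding B_def idx_def by auto
  have single: "{n} \<notin> S" for n
  proof
    assume "{n} \<in> S"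
    then obtain x y where "x \<noteq> y" "{n} = {x,y}" using S by blast
    then show False by (metis insertCI singletonD)
  qed
  show ?thesis
  proof (cases "a = b")
    case True
    then show ?thesis using single ik jl by (auto simp: phi_def)
  next
    case ab: False
    have other: "\<And>c. c \<in> B \<Longrightarrow> c = a \<or> c = b" using card_le2[OF fB cB aB bB] ab by blast
    show ?thesis
    proof (cases "a < b")
      case True
      have pi: "phi N d S \<psi> i = \<psi> i"
      proof -
        have h: "\<not> (\<exists>m. m < N \<and> m < a \<and> (\<exists>k<d m. \<psi> (m,k) \<noteq> 0) \<and> {m, a} \<in> S)"
        proof
          assume "\<exists>m. m < N \<and> m < a \<and> (\<exists>k<d m. \<psi> (m,k) \<noteq> 0) \<and> {m, a} \<in> S"
          then obtain m where "m \<in> B" "m < a" unfolding B_def by blast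
          then show False using other True by fastforce
        qed
        show ?thesis unfolding phi_def ik fst_conv by (simp only: h if_False)
      qed
      have pj: "phi N d S \<psi> j = (if {a,b} \<in> S then - \<psi> j else \<psi> j)"
      proof -
        have h: "(\<exists>m. m < N \<and> m < b \<and> (\<exists>k<d m. \<psi> (m,k) \<noteq> 0) \<and> {m, b} \<in> S) \<longleftrightarrow> {a,b} \<in> S"
        proof
          assume "\<exists>m. m < N \<and> m < b \<and> (\<exists>k<d m. \<psi> (m,k) \<noteq> 0) \<and> {m, b} \<in> S"
          then obtain m where "m \<in> B" "m < b" "{m,b} \<in> S" unfolding B_def by blast
          then show "{a,b} \<in> S" using other by fastforce
        next
          assume "{a,b} \<in> S"
          then show "\<exists>m. m < N \<and> m < b \<and> (\<exists>k<d m. \<psi> (m,k) \<noteq> 0) \<and> {m, b} \<in> S"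
            using aB True unfolding B_def by blast
        qed
        show ?thesis unfolding phi_def jl fst_conv by (simp only: h if_False)
      qed
      show ?thesis using pi pj ik jl by auto
    next
      case False
      then have ba: "b < a" using ab by simp
      have pj: "phi N d S \<psi> j = \<psi> j"
      proof -
        have h: "\<not> (\<exists>m. m < N \<and> m < b \<and> (\<exists>k<d m. \<psi> (m,k) \<noteq> 0) \<and> {m, b} \<in> S)"
        proof
          assume "\<exists>m. m < N \<and> m < b \<and> (\<exists>k<d m. \<psi> (m,k) \<noteq> 0) \<and> {m, b} \<in> S"
          then obtain m where "m \<in> B" "m < b" unfolding B_def by blast
          then show False using other ba by fastforce
        qed
        show ?thesis unfolding phi_def jl fst_conv by (simp only: h if_False)
      qed
      have pi: "phi N d S \<psi> i = (if {b,a} \<in> S then - \<psi> i else \<psi> i)"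
      proof -
        have h: "(\<exists>m. m < N \<and> m < a \<and> (\<exists>k<d m. \<psi> (m,k) \<noteq> 0) \<and> {m, a} \<in> S) \<longleftrightarrow> {b,a} \<in> S"
        proof
          assume "\<exists>m. m < N \<and> m < a \<and> (\<exists>k<d m. \<psi> (m,k) \<noteq> 0) \<and> {m, a} \<in> S"
          then obtain m where "m \<in> B" "m < a" "{m,a} \<in> S" unfolding B_def by blast
          then show "{b,a} \<in> S" using other by fastforce
        next
          assume "{b,a} \<in> S"
          then show "\<exists>m. m < N \<and> m < a \<and> (\<exists>k<d m. \<psi> (m,k) \<noteq> 0) \<and> {m, a} \<in> S"
            using bB ba unfolding B_def by blast
        qed
        show ?thesis unfolding phi_def ik fst_conv by (simp only: h if_False)
      qed
      show ?thesis using pi pj ik jl by (auto simp: insert_commute)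
    qed
  qed
qed

theorem mainTheorem4:
  fixes N :: nat and d :: "nat \<Rightarrow> nat" and p :: "(nat \<Rightarrow> nat) \<Rightarrow> real"
    and S :: "nat set set"
  assumes "is_distribution N d p"
    and "in_BC2 N d (covariance N d p)"
    and "\<forall>e\<in>S. \<exists>a b. a < N \<and> b < N \<and> a \<noteq> b \<and> e = {a, b}"
  shows "psd N d (flip_blocks S (covariance N d p))"
proof -
  obtain \<Psi> where fP: "finite \<Psi>" and nb: "\<forall>\<psi>\<in>\<Psi>. nblocks N d \<psi> \<le> 2"
    and M: "\<forall>i\<in>idx N d. \<forall>j\<in>idx N d. covariance N d p i j = (\<Sum>\<psi>\<in>\<Psi>. \<psi> i * cnj (\<psi> j))"
    using assms(2) unfolding in_BC2_def by blast
  have F: "flip_blocks S (covariance N d p) i j = (\<Sum>\<psi>\<in>\<Psi>. phi N d S \<psi> i * cnj (phi N d S \<psi> j))"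
    if i: "i \<in> idx N d" and j: "j \<in> idx N d" for i j
  proof -
    have "flip_blocks S (covariance N d p) i j
       = (\<Sum>\<psi>\<in>\<Psi>. (if {fst i, fst j} \<in> S then - (\<psi> i * cnj (\<psi> j)) else \<psi> i * cnj (\<psi> j)))"
      using M i j unfolding flip_blocks_def by (simp add: sum_negf)
    also have "\<dots> = (\<Sum>\<psi>\<in>\<Psi>. phi N d S \<psi> i * cnj (phi N d S \<psi> j))"
      by (rule sum.cong[OF refl], rule term_eq[OF assms(3) _ i j]) (use nb in blast)
    finally show ?thesis .
  qed
  show ?thesis unfolding psd_def
  proof
    fix z :: "nat \<times> nat \<Rightarrow> complex"
    define f where "f \<psi> i = cnj (z i) * phi N d S \<psi> i" for \<psi> i
    define w where "w \<psi> = (\<Sum>i\<in>idx N d. f \<psi> i)" for \<psi>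
    have step1: "cnj (z i) * flip_blocks S (covariance N d p) i j * z j
        = (\<Sum>\<psi>\<in>\<Psi>. f \<psi> i * cnj (f \<psi> j))"
      if i: "i \<in> idx N d" and j: "j \<in> idx N d" for i j
    proof -
      have "cnj (z i) * flip_blocks S (covariance N d p) i j * z j
          = (\<Sum>\<psi>\<in>\<Psi>. cnj (z i) * (phi N d S \<psi> i * cnj (phi N d S \<psi> j)) * z j)"
        unfolding F[OF i j] by (simp only: sum_distrib_left sum_distrib_right)
      also have "\<dots> = (\<Sum>\<psi>\<in>\<Psi>. f \<psi> i * cnj (f \<psi> j))"
        by (intro sum.cong refl) (simp add: f_def mult_ac)
      finally show ?thesis .
    qed
    have step2: "w \<psi> * cnj (w \<psi>) = (\<Sum>i\<in>idx N d. \<Sum>j\<in>idx N d. f \<psi> i * cnj (f \<psi> j))" for \<psi>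
      unfolding w_def cnj_sum by (simp only: sum_distrib_left sum_distrib_right) (rule sum.swap)
    have "(\<Sum>i\<in>idx N d. \<Sum>j\<in>idx N d. cnj (z i) * flip_blocks S (covariance N d p) i j * z j)
        = (\<Sum>i\<in>idx N d. \<Sum>j\<in>idx N d. \<Sum>\<psi>\<in>\<Psi>. f \<psi> i * cnj (f \<psi> j))"
      by (intro sum.cong refl step1)
    also have "\<dots> = (\<Sum>i\<in>idx N d. \<Sum>\<psi>\<in>\<Psi>. \<Sum>j\<in>idx N d. f \<psi> i * cnj (f \<psi> j))"
      by (intro sum.cong refl sum.swap)
    also have "\<dots> = (\<Sum>\<psi>\<in>\<Psi>. \<Sum>i\<in>idx N d. \<Sum>j\<in>idx N d. f \<psi> i * cnj (f \<psi> j))"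
      by (rule sum.swap)
    also have "\<dots> = (\<Sum>\<psi>\<in>\<Psi>. w \<psi> * cnj (w \<psi>))"
      by (simp only: step2)
    also have "0 \<le> \<dots>"
      by (intro sum_nonneg) (simp add: less_eq_complex_def)
    finally show "0 \<le> (\<Sum>i\<in>idx N d. \<Sum>j\<in>idx N d. cnj (z i) * flip_blocks S (covariance N d p) i j * z j)" .
  qed
qed

end
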